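(* For all $0\le\varepsilon\le1$, $$\Delta(\varepsilon)=\inf\Big\{\frac gn:\ n\ge g\ge1 \text{ integers},\ \frac{R(g,n)}{n}\ge\varepsilon\Big\}.$$
   Context: A set $S$ of integers is a $B^*[g]$ set if for every integer $m$ there are at most $g$ ordered pairs $(s_1,s_2)\in S\times S$ with $s_1+s_2=m$. $R(g,n)$ is the maximum cardinality of a $B^*[g]$ set contained in $\{1,2,\dots,n\}$. Let $\lambda$ be Lebesgue measure; a set $C\subseteq\mathbb{R}$ is symmetric if there is $c$ with $c+x\in C\iff c-x\in C$; $D(A):=\sup\{\lambda(C): C\subseteq A \text{ measurable and symmetric}\}$, and $\Delta(\varepsilon):=\inf\{D(A): A\subseteq[0,1) \text{ measurable},\ \lambda(A)=\varepsilon\}$. *)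

theory Defs
  imports "HOL-Analysis.Analysis"
begin

definition Bstar :: "nat \<Rightarrow> int set \<Rightarrow> bool" where
  "Bstar g S \<longleftrightarrow> (\<forall>m::int. card {(s1, s2). s1 \<in> S \<and> s2 \<in> S \<and> s1 + s2 = m} \<le> g)"

definition R :: "nat \<Rightarrow> nat \<Rightarrow> nat" where
  "R g n = Max (card ` {S. S \<subseteq> {1..int n} \<and> Bstar g S})"

definition symmetric_set :: "real set \<Rightarrow> bool" where
  "symmetric_set C \<longleftrightarrow> (\<exists>c. \<forall>x. c + x \<in> C \<longleftrightarrow> c - x \<in> C)"

definition D :: "real set \<Rightarrow> real" where
  "D A = Sup {measure lebesgue C | C. C \<subseteq> A \<and> C \<in> sets lebesgue \<and> symmetric_set C}"

definition Delta :: "real \<Rightarrow> real" where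
  "Delta \<epsilon> = Inf {D A | A. A \<subseteq> {0..<1} \<and> A \<in> sets lebesgue \<and> measure lebesgue A = \<epsilon>}"

end

theory Submission imports Defs begin


lemma lmeasurable_Ico_real[simp]: "{a..<b::real} \<in> lmeasurable"
  by (rule fmeasurableI2[of "{a..b}"]) auto

lemma refl_measure: "measure lebesgue ((\<lambda>x::real. d - x) ` S) = measure lebesgue S"
proof -
  have "(\<lambda>x::real. d - x) = (\<lambda>x. (-1) *\<^sub>R x + d)" by (auto simp: fun_eq_iff)
  then show ?thesis using measure_lebesgue_affine[of "-1" d S] by simp
qed

lemma refl_meas_fun: "(\<lambda>x::real. d - x) \<in> lebesgue \<rightarrow>\<^sub>M lebesgue"
proof -
  have "(\<lambda>x::real. d - x) = (\<lambda>x. d + (\<Sum>j\<in>Basis. ((-1) * (x \<bullet> j)) *\<^sub>R j))" by (auto simp: fun_eq_iff)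
  then show ?thesis using lebesgue_affine_measurable[of "\<lambda>_. -1" d] by simp
qed

lemma refl_sets: "A \<in> sets lebesgue \<Longrightarrow> {x::real. d - x \<in> A} \<in> sets lebesgue"
  using measurable_sets[OF refl_meas_fun, of A d] by (simp add: vimage_def)

lemma D_set_bdd:
  assumes "A \<subseteq> {0..<1}"
  shows "bdd_above {measure lebesgue C | C. C \<subseteq> A \<and> C \<in> sets lebesgue \<and> symmetric_set C}"
proof (rule bdd_aboveI[of _ 1])
  fix x assume "x \<in> {measure lebesgue C | C. C \<subseteq> A \<and> C \<in> sets lebesgue \<and> symmetric_set C}"
  then obtain C where C: "x = measure lebesgue C" "C \<subseteq> A" "C \<in> sets lebesgue" by auto
  have "measure lebesgue C \<le> measure lebesgue {0..1::real}"
    by (rule measure_mono_fmeasurable) (use C assms in auto)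
  then show "x \<le> 1" using C by simp
qed

lemma symmetric_empty: "symmetric_set {}"
  unfolding symmetric_set_def by auto

lemma D_ge:
  assumes "A \<subseteq> {0..<1}" "C \<subseteq> A" "C \<in> sets lebesgue" "symmetric_set C"
  shows "measure lebesgue C \<le> D A"
  unfolding D_def by (rule cSup_upper[OF _ D_set_bdd[OF assms(1)]]) (use assms in auto)

lemma D_nonneg:
  assumes "A \<subseteq> {0..<1}" shows "0 \<le> D A"
  using D_ge[OF assms, of "{}"] symmetric_empty by simp

lemma D_le:
  assumes "\<And>C. C \<subseteq> A \<Longrightarrow> C \<in> sets lebesgue \<Longrightarrow> symmetric_set C \<Longrightarrow> measure lebesgue C \<le> b"
  shows "D A \<le> b"
  unfolding D_def
proof (rule cSup_least)
  show "{measure lebesgue C |C. C \<subseteq> A \<and> C \<in> sets lebesgue \<and> symmetric_set C} \<noteq> {}"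
    using symmetric_empty by blast
qed (use assms in auto)

lemma D_lower:
  assumes A: "A \<in> sets lebesgue" "A \<subseteq> {0..<1}" and C: "C \<in> lmeasurable"
    and symC: "\<And>x. x \<in> C \<longleftrightarrow> d - x \<in> C"
  shows "measure lebesgue C - 2 * measure lebesgue (C - A) \<le> D A"
proof -
  define CA where "CA = C \<inter> A \<inter> {x. d - x \<in> A}"
  have CAm: "CA \<in> sets lebesgue" unfolding CA_def using A C refl_sets[OF A(1)] by auto
  have "symmetric_set CA" unfolding symmetric_set_def
  proof (intro exI allI)
    fix x
    show "d/2 + x \<in> CA \<longleftrightarrow> d/2 - x \<in> CA"
      unfolding CA_def using symC[of "d/2 + x"] symC[of "d/2 - x"] by (auto simp: algebra_simps)
  qed
  then have 1: "measure lebesgue CA \<le> D A"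
    by (intro D_ge[OF A(2)]) (use CAm CA_def in auto)
  have eq: "C - CA = (C - A) \<union> (\<lambda>x. d - x) ` (C - A)"
  proof
    show "C - CA \<subseteq> (C - A) \<union> (\<lambda>x. d - x) ` (C - A)"
    proof
      fix x assume x: "x \<in> C - CA"
      show "x \<in> (C - A) \<union> (\<lambda>x. d - x) ` (C - A)"
      proof (cases "x \<in> A")
        case True
        then have "d - x \<notin> A" using x unfolding CA_def by auto
        moreover have "d - x \<in> C" using x symC by auto
        ultimately have "d - x \<in> C - A" by auto
        then show ?thesis by (intro UnI2 image_eqI[of _ _ "d - x"]) auto
      qed (use x in auto)
    qed
    show "(C - A) \<union> (\<lambda>x. d - x) ` (C - A) \<subseteq> C - CA"
      using symC unfolding CA_def by auto
  qed
  have CAf: "CA \<in> lmeasurable" by (rule fmeasurableI2[OF C]) (use CAm CA_def in auto)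
  have imm: "(\<lambda>x. d - x) ` (C - A) \<in> sets lebesgue"
  proof -
    have "(\<lambda>x. d - x) ` (C - A) = {x. d - x \<in> C - A}" by (auto intro: image_eqI[of _ _ "d - _"])
    then show ?thesis using refl_sets[of "C - A" d] A C by auto
  qed
  have "measure lebesgue (C - CA) = measure lebesgue C - measure lebesgue CA"
    by (rule measure_Diff) (use C CAm in \<open>auto simp: CA_def fmeasurable_def\<close>)
  then have "measure lebesgue C = measure lebesgue CA + measure lebesgue (C - CA)" by simp
  also have "measure lebesgue (C - CA) \<le> measure lebesgue (C - A) + measure lebesgue ((\<lambda>x. d - x) ` (C - A))"
    unfolding eq by (rule measure_Un_le) (use A C imm in auto)
  finally show ?thesis using 1 refl_measure[of d "C - A"] by linarith
qed

lemma card_P_le: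
  assumes B: "Bstar g S" and fin: "finite S"
  shows "card {s\<in>S. m - s \<in> S} \<le> g"
proof -
  have "card {s\<in>S. m - s \<in> S} \<le> card {(s1, s2). s1 \<in> S \<and> s2 \<in> S \<and> s1 + s2 = m}"
  proof (rule card_inj_on_le[of "\<lambda>s. (s, m - s)"])
    show "inj_on (\<lambda>s. (s, m - s)) {s \<in> S. m - s \<in> S}" by (auto simp: inj_on_def)
    show "(\<lambda>s. (s, m - s)) ` {s \<in> S. m - s \<in> S} \<subseteq> {(s1, s2). s1 \<in> S \<and> s2 \<in> S \<and> s1 + s2 = m}" by auto
    show "finite {(s1, s2). s1 \<in> S \<and> s2 \<in> S \<and> s1 + s2 = m}"
      by (rule finite_subset[of _ "S \<times> S"]) (use fin in auto)
  qed
  also have "\<dots> \<le> g" using B unfolding Bstar_def by blast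
  finally show ?thesis .
qed

lemma cells_bound:
  fixes S :: "int set" and n g :: nat
  assumes n: "n \<ge> 1" and B: "Bstar g S" and fin: "finite S"
    and CA: "C \<subseteq> (\<Union>s\<in>S. {real_of_int (s-1)/n ..< real_of_int s / n})"
    and Cm: "C \<in> sets lebesgue" and sym: "symmetric_set C"
  shows "measure lebesgue C \<le> g / n"
proof -
  have npos: "real n > 0" using n by simp
  obtain c where c: "\<And>x. c + x \<in> C \<longleftrightarrow> c - x \<in> C" using sym unfolding symmetric_set_def by blast
  have refl: "2*c - y \<in> C" if "y \<in> C" for y using c[of "y - c"] that by (simp add: algebra_simps)
  define q where "q = \<lfloor>2*c*n\<rfloor>"
  define \<phi> where "\<phi> = 2*c*n - q"
  have phi: "0 \<le> \<phi>" "\<phi> < 1" unfolding \<phi>_def q_def by linarith+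
  define P1 where "P1 = {s\<in>S. (q+2) - s \<in> S}"
  define P2 where "P2 = {s\<in>S. (q+1) - s \<in> S}"
  define J1 where "J1 s = {real_of_int (s-1)/n .. (real_of_int (s-1) + \<phi>)/n}" for s
  define J2 where "J2 s = {(real_of_int (s-1) + \<phi>)/n .. real_of_int s/n}" for s
  have cellD: "real_of_int (s-1) \<le> y*n \<and> y*n < real_of_int s"
    if "y \<in> {real_of_int (s-1)/n ..< real_of_int s / n}" for y s
    using that npos by (auto simp: divide_le_eq le_divide_eq less_divide_eq)
  have cover: "C \<subseteq> (\<Union>s\<in>P1. J1 s) \<union> (\<Union>s\<in>P2. J2 s)"
  proof
    fix y assume y: "y \<in> C"
    obtain s where s: "s \<in> S" "y \<in> {real_of_int (s-1)/n ..< real_of_int s / n}" using CA y by blast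
    obtain t where t: "t \<in> S" "2*c - y \<in> {real_of_int (t-1)/n ..< real_of_int t / n}"
      using CA refl[OF y] by blast
    define u where "u = y*n"
    define v where "v = (2*c - y)*n"
    have u: "real_of_int (s-1) \<le> u" "u < real_of_int s" using cellD[OF s(2)] u_def by auto
    have v: "real_of_int (t-1) \<le> v" "v < real_of_int t" using cellD[OF t(2)] v_def by auto
    have vq: "v = q + \<phi> - u" unfolding v_def u_def \<phi>_def by (simp add: algebra_simps)
    show "y \<in> (\<Union>s\<in>P1. J1 s) \<union> (\<Union>s\<in>P2. J2 s)"
    proof (cases "u \<le> real_of_int (s-1) + \<phi>")
      case True
      have "real_of_int (t - 1) < real_of_int (q - s + 2)" using v vq u phi by simp
      then have 1: "t - 1 < q - s + 2" by linarith
      have "real_of_int (q - s + 1) < real_of_int t" using v vq True phi by simp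
      then have 2: "q - s + 1 < t" by linarith
      have "t = q + 2 - s" using 1 2 by linarith
      then have "s \<in> P1" unfolding P1_def using s t by auto
      moreover have "y \<in> J1 s" unfolding J1_def using True u npos u_def
        by (auto simp: divide_le_eq le_divide_eq)
      ultimately show ?thesis by blast
    next
      case False
      have "real_of_int (t - 1) < real_of_int (q - s + 1)" using v vq False phi by simp
      then have 1: "t - 1 < q - s + 1" by linarith
      have "real_of_int (q - s) < real_of_int t" using v vq u phi by simp
      then have 2: "q - s < t" by linarith
      have "t = q + 1 - s" using 1 2 by linarith
      then have "s \<in> P2" unfolding P2_def using s t by auto
      moreover have "y \<in> J2 s" unfolding J2_def using False u npos u_def
        by (auto simp: divide_le_eq le_divide_eq)
      ultimately show ?thesis by blast
    qed
  qed
  have finP: "finite P1" "finite P2" unfolding P1_def P2_def using fin by auto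
  have U1: "(\<Union>s\<in>P1. J1 s) \<in> lmeasurable" using finP unfolding J1_def by (intro fmeasurable.finite_UN) auto
  have U2: "(\<Union>s\<in>P2. J2 s) \<in> lmeasurable" using finP unfolding J2_def by (intro fmeasurable.finite_UN) auto
  have mJ1: "measure lebesgue (J1 s) = \<phi>/n" for s
  proof -
    have le: "real_of_int (s-1)/n \<le> (real_of_int (s-1) + \<phi>)/n" using phi npos by (intro divide_right_mono) auto
    have "measure lebesgue (J1 s) = (real_of_int (s-1) + \<phi>)/n - real_of_int (s-1)/n"
      unfolding J1_def using le by simp
    also have "\<dots> = \<phi>/n" by (simp only: diff_divide_distrib[symmetric]) simp
    finally show ?thesis .
  qed
  have mJ2: "measure lebesgue (J2 s) = (1 - \<phi>)/n" for s
  proof -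
    have le: "(real_of_int (s-1) + \<phi>)/n \<le> real_of_int s/n" using phi npos by (intro divide_right_mono) auto
    have "measure lebesgue (J2 s) = real_of_int s/n - (real_of_int (s-1) + \<phi>)/n"
      unfolding J2_def using le by simp
    also have "\<dots> = (1 - \<phi>)/n" by (simp only: diff_divide_distrib[symmetric]) simp
    finally show ?thesis .
  qed
  have "measure lebesgue C \<le> measure lebesgue ((\<Union>s\<in>P1. J1 s) \<union> (\<Union>s\<in>P2. J2 s))"
    by (rule measure_mono_fmeasurable[OF cover Cm]) (use U1 U2 in auto)
  also have "\<dots> \<le> measure lebesgue (\<Union>s\<in>P1. J1 s) + measure lebesgue (\<Union>s\<in>P2. J2 s)"
    by (rule measure_Un_le) (use U1 U2 in auto)
  also have "measure lebesgue (\<Union>s\<in>P1. J1 s) \<le> (\<Sum>s\<in>P1. measure lebesgue (J1 s))"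
    by (rule measure_UNION_le) (use finP in \<open>auto simp: J1_def\<close>)
  also have "measure lebesgue (\<Union>s\<in>P2. J2 s) \<le> (\<Sum>s\<in>P2. measure lebesgue (J2 s))"
    by (rule measure_UNION_le) (use finP in \<open>auto simp: J2_def\<close>)
  also have "(\<Sum>s\<in>P1. measure lebesgue (J1 s)) + (\<Sum>s\<in>P2. measure lebesgue (J2 s))
      = card P1 * (\<phi>/n) + card P2 * ((1-\<phi>)/n)" by (simp add: mJ1 mJ2)
  also have "\<dots> \<le> g * (\<phi>/n) + g * ((1-\<phi>)/n)"
  proof -
    have "card P1 \<le> g" unfolding P1_def by (rule card_P_le[OF B fin])
    moreover have "card P2 \<le> g" unfolding P2_def by (rule card_P_le[OF B fin])
    ultimately show ?thesis using phi npos
      by (intro add_mono mult_right_mono) auto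
  qed
  also have "\<dots> = g / n" using npos by (simp add: field_simps)
  finally show ?thesis by simp
qed

lemma Bstar_empty: "Bstar g {}"
  unfolding Bstar_def by simp

lemma R_fin: "finite (card ` {S. S \<subseteq> {1..int n} \<and> Bstar g S})"
  by (rule finite_imageI, rule finite_subset[of _ "Pow {1..int n}"]) auto

lemma R_ge: "S \<subseteq> {1..int n} \<Longrightarrow> Bstar g S \<Longrightarrow> card S \<le> R g n"
  unfolding R_def by (rule Max_ge[OF R_fin]) auto

lemma R_attained: "\<exists>S. S \<subseteq> {1..int n} \<and> Bstar g S \<and> card S = R g n"
proof -
  have "R g n \<in> card ` {S. S \<subseteq> {1..int n} \<and> Bstar g S}"
    unfolding R_def by (rule Max_in[OF R_fin]) (use Bstar_empty in auto)
  then show ?thesis by auto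
qed

lemma Delta_set_bdd: "bdd_below {D A | A. A \<subseteq> {0..<1} \<and> A \<in> sets lebesgue \<and> measure lebesgue A = \<epsilon>}"
  by (rule bdd_belowI[of _ 0]) (auto intro: D_nonneg)

lemma Delta_le:
  assumes "A \<subseteq> {0..<1}" "A \<in> sets lebesgue" "measure lebesgue A = \<epsilon>"
  shows "Delta \<epsilon> \<le> D A"
  unfolding Delta_def by (rule cInf_lower[OF _ Delta_set_bdd]) (use assms in auto)

lemma dir1:
  fixes g n :: nat and \<epsilon> :: real
  assumes g: "1 \<le> g" "g \<le> n" and eps: "\<epsilon> \<le> real (R g n) / real n" "0 \<le> \<epsilon>"
  shows "Delta \<epsilon> \<le> real g / real n"
proof -
  have n: "n \<ge> 1" using g by simp
  have npos: "real n > 0" using n by simp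
  obtain S where S: "S \<subseteq> {1..int n}" "Bstar g S" "card S = R g n" using R_attained by blast
  have fin: "finite S" using S(1) finite_subset by blast
  define k where "k = card S"
  define l where "l = \<epsilon> / k"
  have ek: "\<epsilon> * n \<le> k" using eps(1) npos S(3) k_def by (simp add: le_divide_eq)
  have l0: "0 \<le> l" unfolding l_def using eps by simp
  have l1: "l \<le> 1 / n"
  proof (cases "k = 0")
    case True then show ?thesis unfolding l_def using npos by simp
  next
    case False then show ?thesis unfolding l_def using ek npos
      by (simp add: divide_le_eq field_simps)
  qed
  define I where "I s = {real_of_int (s-1)/n ..< real_of_int (s-1)/n + l}" for s
  define A where "A = (\<Union>s\<in>S. I s)"
  have Isub: "I s \<subseteq> {real_of_int (s-1)/n ..< real_of_int s / n}" for s
  proof -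
    have "real_of_int (s-1)/n + l \<le> real_of_int s / n" using l1
      by (simp add: diff_divide_distrib)
    then show ?thesis unfolding I_def by auto
  qed
  have Asub: "A \<subseteq> {0..<1}"
  proof
    fix x assume "x \<in> A"
    then obtain s where s: "s \<in> S" "x \<in> I s" unfolding A_def by auto
    have s1: "1 \<le> s" "s \<le> int n" using s S(1) by auto
    have "0 \<le> real_of_int (s-1)/n" using s1 npos by simp
    moreover have "real_of_int s / n \<le> 1" using s1 npos by (simp add: divide_le_eq)
    ultimately show "x \<in> {0..<1}" using Isub[of s] s by auto
  qed
  have Am: "A \<in> sets lebesgue" unfolding A_def I_def using fin by (intro sets.finite_UN) auto
  have mA: "measure lebesgue A = \<epsilon>"
  proof (cases "k = 0")
    case True
    then have "S = {}" using fin k_def by simp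
    have "\<epsilon> * n \<le> 0" using ek True by simp
    then have "\<epsilon> \<le> 0" using npos by (simp add: mult_le_0_iff)
    then show ?thesis using \<open>S = {}\<close> eps unfolding A_def by simp
  next
    case False
    have "measure lebesgue A = (\<Sum>s\<in>S. measure lebesgue (I s))"
      unfolding A_def
    proof (rule measure_finite_Union[OF fin])
      show "I ` S \<subseteq> sets lebesgue" unfolding I_def by auto
      show "\<And>s. s \<in> S \<Longrightarrow> emeasure lebesgue (I s) \<noteq> \<infinity>" unfolding I_def using l0 by simp
      show "disjoint_family_on I S" unfolding disjoint_family_on_def
      proof (intro ballI impI)
        fix s t assume st: "s \<in> S" "t \<in> S" "s \<noteq> t"
        show "I s \<inter> I t = {}"
        proof (cases "s < t")
          case True
          then have "real_of_int s / n \<le> real_of_int (t-1) / n" using npos by (intro divide_right_mono) auto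
          then show ?thesis using Isub[of s] unfolding I_def by auto
        next
          case False
          then have "real_of_int t / n \<le> real_of_int (s-1) / n" using st npos by (intro divide_right_mono) auto
          then show ?thesis using Isub[of t] unfolding I_def by auto
        qed
      qed
    qed
    also have "\<dots> = (\<Sum>s\<in>S. l)" unfolding I_def using l0 by simp
    also have "\<dots> = \<epsilon>" using False unfolding l_def k_def by simp
    finally show ?thesis .
  qed
  have "D A \<le> real g / real n"
  proof (rule D_le)
    fix C assume C: "C \<subseteq> A" "C \<in> sets lebesgue" "symmetric_set C"
    show "measure lebesgue C \<le> real g / real n"
    proof (rule cells_bound[OF n S(2) fin _ C(2) C(3)])
      show "C \<subseteq> (\<Union>s\<in>S. {real_of_int (s-1)/n ..< real_of_int s / n})"
        using C(1) Isub unfolding A_def by blast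
    qed
  qed
  moreover have "Delta \<epsilon> \<le> D A" by (rule Delta_le[OF Asub Am mA])
  ultimately show ?thesis by linarith
qed

lemma pairs_card: "finite S \<Longrightarrow> card {(s1, s2). s1 \<in> S \<and> s2 \<in> S \<and> s1 + s2 = (m::int)} = card {s\<in>S. m - s \<in> S}"
proof -
  assume fin: "finite S"
  have "{(s1, s2). s1 \<in> S \<and> s2 \<in> S \<and> s1 + s2 = m} = (\<lambda>s. (s, m - s)) ` {s\<in>S. m - s \<in> S}"
    by force
  moreover have "inj_on (\<lambda>s. (s, m - s)) {s\<in>S. m - s \<in> S}" by (auto simp: inj_on_def)
  ultimately show ?thesis by (simp add: card_image)
qed

lemma repcount:
  fixes S :: "int set"
  assumes fin: "finite S" and ne: "S \<noteq> {}"
  shows "\<exists>G m0. Bstar G S \<and> G = card {s\<in>S. m0 - s \<in> S} \<and> 1 \<le> G \<and> G \<le> card S"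
proof -
  define r where "r m = card {s\<in>S. m - s \<in> S}" for m
  have rle: "r m \<le> card S" for m unfolding r_def by (rule card_mono[OF fin]) auto
  have finr: "finite (range r)" by (rule finite_subset[of _ "{0..card S}"]) (use rle in auto)
  define G where "G = Max (range r)"
  have "G \<in> range r" unfolding G_def by (rule Max_in[OF finr]) auto
  then obtain m0 where m0: "G = r m0" by auto
  have B: "Bstar G S" unfolding Bstar_def
  proof
    fix m
    have "r m \<le> G" unfolding G_def by (rule Max_ge[OF finr]) auto
    then show "card {(s1, s2). s1 \<in> S \<and> s2 \<in> S \<and> s1 + s2 = m} \<le> G"
      using pairs_card[OF fin] r_def by simp
  qed
  obtain s where s: "s \<in> S" using ne by auto
  have "1 \<le> r (2 * s)" unfolding r_def
  proof -
    have "s \<in> {t\<in>S. 2 * s - t \<in> S}" using s by auto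
    then have "{t\<in>S. 2 * s - t \<in> S} \<noteq> {}" by blast
    moreover have "finite {t\<in>S. 2 * s - t \<in> S}" using fin by auto
    ultimately show "1 \<le> card {t\<in>S. 2 * s - t \<in> S}" by (simp add: Suc_le_eq card_gt_0_iff)
  qed
  also have "r (2 * s) \<le> G" unfolding G_def by (rule Max_ge[OF finr]) auto
  finally have "1 \<le> G" .
  then show ?thesis using B m0 rle r_def by blast
qed


lemma exists_E:
  fixes A :: "real set"
  assumes A: "A \<subseteq> {0..<1}" "A \<in> sets lebesgue" "measure lebesgue A < 1" and eta: "\<eta> > 0"
  shows "\<exists>E. E \<subseteq> {0..<1} - A \<and> E \<in> sets lebesgue \<and> 0 < measure lebesgue E \<and> measure lebesgue E \<le> \<eta>"
proof -
  obtain N :: nat where N: "1 / \<eta> < N" using reals_Archimedean2 by blast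
  have "0 < 1 / \<eta>" using eta by simp
  then have Npos: "real N > 0" using N by linarith
  have N1: "1 / real N \<le> \<eta>" using N eta Npos by (simp add: field_simps)
  define B where "B = {0..<1::real} - A"
  define E where "E i = B \<inter> {real i / N ..< real (Suc i) / N}" for i :: nat
  have Bm: "B \<in> sets lebesgue" unfolding B_def using A by auto
  have Em: "E i \<in> sets lebesgue" for i unfolding E_def using Bm by auto
  have mB: "measure lebesgue B = 1 - measure lebesgue A"
    unfolding B_def by (subst measure_Diff) (use A in auto)
  have cov: "B \<subseteq> (\<Union>i<N. E i)"
  proof
    fix x assume x: "x \<in> B"
    then have x01: "0 \<le> x" "x < 1" unfolding B_def by auto
    define i where "i = nat \<lfloor>x * N\<rfloor>"
    have "0 \<le> x * N" using x01 Npos by simp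
    then have i1: "real i \<le> x * N" "x * N < real i + 1" unfolding i_def by linarith+
    have "x * N < N" using x01 Npos by simp
    then have "i < N" using i1 by linarith
    moreover have "x \<in> E i" unfolding E_def using x i1 Npos by (auto simp: divide_le_eq less_divide_eq)
    ultimately show "x \<in> (\<Union>i<N. E i)" by blast
  qed
  have "measure lebesgue B \<le> measure lebesgue (\<Union>i<N. E i)"
  proof (rule measure_mono_fmeasurable[OF cov Bm])
    have Um: "(\<Union>i<N. E i) \<in> sets lebesgue" by (intro sets.finite_UN) (use Em in auto)
    have sub: "(\<Union>i<N. E i) \<subseteq> {0..1}" unfolding E_def B_def by auto
    have L: "{0..1::real} \<in> lmeasurable" by simp
    show "(\<Union>i<N. E i) \<in> lmeasurable" by (rule fmeasurableI2[OF L sub Um])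
  qed
  also have "\<dots> \<le> (\<Sum>i<N. measure lebesgue (E i))" by (rule measure_UNION_le) (use Em in auto)
  finally have "0 < (\<Sum>i<N. measure lebesgue (E i))" using mB A by linarith
  then have "\<exists>i. 0 < measure lebesgue (E i)"
  proof (rule contrapos_pp)
    assume "\<not> (\<exists>i. 0 < measure lebesgue (E i))"
    then have "\<And>i. measure lebesgue (E i) \<le> 0" by (simp add: not_less)
    then have "(\<Sum>i<N. measure lebesgue (E i)) \<le> 0" by (intro sum_nonpos)
    then show "\<not> 0 < (\<Sum>i<N. measure lebesgue (E i))" by simp
  qed
  then obtain i where "0 < measure lebesgue (E i)" by blast
  moreover have "measure lebesgue (E i) \<le> measure lebesgue {real i / N ..< real (Suc i) / N}"
    by (rule measure_mono_fmeasurable) (use Em in \<open>auto simp: E_def\<close>)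
  moreover have "measure lebesgue {real i / N ..< real (Suc i) / N} = 1 / N"
  proof -
    have "real i / N \<le> real (Suc i) / N" using Npos by (intro divide_right_mono) auto
    then have "measure lebesgue {real i / N ..< real (Suc i) / N} = real (Suc i) / N - real i / N" by simp
    also have "\<dots> = 1 / N" by (simp only: diff_divide_distrib[symmetric]) simp
    finally show ?thesis .
  qed
  moreover have "E i \<subseteq> {0..<1} - A" unfolding E_def B_def by auto
  ultimately have "E i \<subseteq> {0..<1} - A \<and> E i \<in> sets lebesgue \<and> 0 < measure lebesgue (E i) \<and> measure lebesgue (E i) \<le> \<eta>"
    using Em[of i] N1 by linarith
  then show ?thesis by blast
qed

lemma sub01_lmeas: "X \<in> sets lebesgue \<Longrightarrow> X \<subseteq> {0..1::real} \<Longrightarrow> X \<in> lmeasurable"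
proof -
  assume "X \<in> sets lebesgue" "X \<subseteq> {0..1::real}"
  moreover have L: "{0..1::real} \<in> lmeasurable" by simp
  ultimately show ?thesis using fmeasurableI2[OF L] by blast
qed

lemma cell_measure:
  assumes "real n > 0"
  shows "measure lebesgue {real_of_int (k-1)/n ..< real_of_int k/n} = 1/n"
    and "measure lebesgue {real_of_int (k-1)/n <..< real_of_int k/n} = 1/n"
proof -
  have le: "real_of_int (k-1)/n \<le> real_of_int k/n" using assms by (intro divide_right_mono) auto
  have "real_of_int k/n - real_of_int (k-1)/n = 1/n" by (simp only: diff_divide_distrib[symmetric]) simp
  then show "measure lebesgue {real_of_int (k-1)/n ..< real_of_int k/n} = 1/n"
    and "measure lebesgue {real_of_int (k-1)/n <..< real_of_int k/n} = 1/n" using le by simp_all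
qed

lemma cell_mem:
  assumes "real n > 0"
  shows "x \<in> {real_of_int (k-1)/n ..< real_of_int k/n} \<longleftrightarrow> real_of_int (k-1) \<le> x * n \<and> x * n < real_of_int k"
  using assms by (auto simp: divide_le_eq le_divide_eq less_divide_eq)

lemma ocell_mem:
  assumes "real n > 0"
  shows "x \<in> {real_of_int (k-1)/n <..< real_of_int k/n} \<longleftrightarrow> real_of_int (k-1) < x * n \<and> x * n < real_of_int k"
  using assms by (auto simp: divide_less_eq less_divide_eq)



lemma sub01'_lmeas: "X \<in> sets lebesgue \<Longrightarrow> X \<subseteq> {0..<1::real} \<Longrightarrow> X \<in> lmeasurable"
proof -
  assume a: "X \<in> sets lebesgue" "X \<subseteq> {0..<1::real}"
  then have "X \<subseteq> {0..1}" by auto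
  then show ?thesis using sub01_lmeas a by blast
qed

lemma dir2_lt1:
  fixes A :: "real set"
  assumes A: "A \<subseteq> {0..<1}" "A \<in> sets lebesgue" "measure lebesgue A = \<epsilon>" "\<epsilon> < 1" and \<delta>: "\<delta> > 0"
  shows "\<exists>g n. 1 \<le> g \<and> g \<le> n \<and> \<epsilon> \<le> real (R g n) / real n \<and> real g / real n \<le> D A + \<delta>"
proof -
  define \<eta> where "\<eta> = \<delta> / 4"
  have eta: "\<eta> > 0" unfolding \<eta>_def using \<delta> by simp
  obtain E where E: "E \<subseteq> {0..<1} - A" "E \<in> sets lebesgue" "0 < measure lebesgue E" "measure lebesgue E \<le> \<eta>"
    using exists_E[OF A(1,2) _ eta] A(3,4) by auto
  define A' where "A' = A \<union> E"
  have A'm: "A' \<in> sets lebesgue" unfolding A'_def using A E by auto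
  have A'sub: "A' \<subseteq> {0..<1}" unfolding A'_def using A E by auto
  have Al: "A \<in> lmeasurable" using sub01'_lmeas[OF A(2) A(1)] .
  have El: "E \<in> lmeasurable" using sub01'_lmeas[OF E(2)] E(1) by auto
  have mA': "measure lebesgue A' = \<epsilon> + measure lebesgue E"
    unfolding A'_def using A(3) E(1) Al El
    by (subst measure_Union) (auto simp: fmeasurable_def)
  obtain V where V: "open V" "A' \<subseteq> V" "V - A' \<in> lmeasurable" "emeasure lebesgue (V - A') < ennreal \<eta>"
    using sets_lebesgue_outer_open[OF A'm eta] by blast
  have mVA': "measure lebesgue (V - A') < \<eta>"
    using V(4) unfolding emeasure_eq_measure2[OF V(3)] by (simp add: ennreal_less_iff)
  obtain T where T: "closed T" "T \<subseteq> A'" "A' - T \<in> lmeasurable" "emeasure lebesgue (A' - T) < ennreal (measure lebesgue E)"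
    using sets_lebesgue_inner_closed[OF A'm E(3)] by blast
  have mA'T: "measure lebesgue (A' - T) < measure lebesgue E"
    using T(4) unfolding emeasure_eq_measure2[OF T(3)] by (simp add: ennreal_less_iff)
  have Tm: "T \<in> sets lebesgue"
  proof -
    have "T = A' - (A' - T)" using T(2) by auto
    then show ?thesis using A'm T(3) by (metis fmeasurableD sets.Diff)
  qed
  have A'l: "A' \<in> lmeasurable" using sub01'_lmeas[OF A'm A'sub] .
  have "measure lebesgue (A' - T) = measure lebesgue A' - measure lebesgue T"
    by (rule measure_Diff) (use A'l Tm T(2) in \<open>auto simp: fmeasurable_def\<close>)
  then have mT: "\<epsilon> < measure lebesgue T" using mA' mA'T by linarith
  have "compact T"
  proof -
    have "bounded T" by (rule bounded_subset[of "{0..1}"]) (use T(2) A'sub in auto)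
    then show ?thesis using T(1) compact_eq_bounded_closed by blast
  qed
  moreover have "closed (- V)" using V(1) by (simp add: closed_Compl)
  moreover have "T \<inter> - V = {}" using V(2) T(2) by auto
  ultimately obtain r where r: "r > 0" "\<And>x y. x \<in> T \<Longrightarrow> y \<in> - V \<Longrightarrow> r \<le> dist x y"
    using separate_compact_closed[of T "- V"] by metis
  have ballV: "y \<in> V" if "x \<in> T" "dist x y < r" for x y
    using r(2)[of x y] that by force
  obtain n :: nat where n: "1 / r < n" using reals_Archimedean2 by blast
  have "0 < 1 / r" using r by simp
  then have npos: "real n > 0" using n by linarith
  have n1: "1 / real n < r" using n r npos by (simp add: field_simps)
  define cell where "cell k = {real_of_int (k-1)/n ..< real_of_int k/n}" for k
  define S where "S = {k \<in> {1..int n}. cell k \<subseteq> V}"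
  have Ssub: "S \<subseteq> {1..int n}" unfolding S_def by auto
  have finS: "finite S" using Ssub finite_subset by blast
  have cover: "T \<subseteq> (\<Union>k\<in>S. cell k)"
  proof
    fix x assume x: "x \<in> T"
    then have x01: "0 \<le> x" "x < 1" using T(2) A'sub by auto
    define k where "k = \<lfloor>x * n\<rfloor> + 1"
    have k1: "real_of_int (k-1) \<le> x * n" "x * n < real_of_int k" unfolding k_def by linarith+
    have "0 \<le> x * n" using x01 npos by simp
    then have "1 \<le> k" unfolding k_def by linarith
    moreover have "x * n < n" using x01 npos by simp
    then have "k \<le> int n" using k1 by linarith
    moreover have xin: "x \<in> cell k" unfolding cell_def using cell_mem[OF npos] k1 by blast
    moreover have "cell k \<subseteq> V"
    proof
      fix y assume y: "y \<in> cell k"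
      have "real_of_int (k-1) \<le> y * n" "y * n < real_of_int k"
        using y cell_mem[OF npos] unfolding cell_def by blast+
      then have "\<bar>y * n - x * n\<bar> < 1" using k1 by linarith
      then have "\<bar>y - x\<bar> * n < 1" by (simp add: left_diff_distrib[symmetric] abs_mult)
      then have "\<bar>y - x\<bar> < 1 / n" using npos by (simp add: less_divide_eq)
      then have "dist x y < r" using n1 by (simp add: dist_real_def abs_minus_commute)
      then show "y \<in> V" using ballV x by blast
    qed
    ultimately show "x \<in> (\<Union>k\<in>S. cell k)" unfolding S_def by auto
  qed
  have "measure lebesgue T \<le> measure lebesgue (\<Union>k\<in>S. cell k)"
  proof (rule measure_mono_fmeasurable[OF cover Tm])
    show "(\<Union>k\<in>S. cell k) \<in> lmeasurable" unfolding cell_def using finS by (intro fmeasurable.finite_UN) auto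
  qed
  also have "\<dots> \<le> (\<Sum>k\<in>S. measure lebesgue (cell k))"
    by (rule measure_UNION_le) (use finS in \<open>auto simp: cell_def\<close>)
  also have "\<dots> = card S / n" unfolding cell_def using cell_measure(1)[OF npos] by simp
  finally have epsS: "\<epsilon> < card S / n" using mT by linarith
  then have "S \<noteq> {}" using A Al by (auto intro: measure_nonneg)
  then obtain G m0 where G: "Bstar G S" "G = card {s\<in>S. m0 - s \<in> S}" "1 \<le> G" "G \<le> card S"
    using repcount[OF finS] by blast
  have cardS: "card S \<le> n" using card_mono[OF _ Ssub] by simp
  have RG: "card S \<le> R G n" by (rule R_ge[OF Ssub G(1)])
  have epsR: "\<epsilon> \<le> real (R G n) / real n"
  proof -
    have "real (card S) / n \<le> real (R G n) / n" using RG npos by (intro divide_right_mono) auto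
    then show ?thesis using epsS by linarith
  qed
  define P where "P = {s\<in>S. m0 - s \<in> S}"
  define ocell where "ocell k = {real_of_int (k-1)/n <..< real_of_int k/n}" for k
  define C where "C = (\<Union>s\<in>P. ocell s)"
  define d where "d = real_of_int (m0 - 1) / n"
  have finP: "finite P" unfolding P_def using finS by auto
  have symC1: "d - x \<in> C" if xC: "x \<in> C" for x
  proof -
    obtain s where s: "s \<in> P" "x \<in> ocell s" using xC unfolding C_def by auto
    have xs: "real_of_int (s-1) < x * n" "x * n < real_of_int s" using s(2) ocell_mem[OF npos] unfolding ocell_def by blast+
    have dn: "d * n = real_of_int (m0 - 1)" unfolding d_def using npos by simp
    have "(d - x) * n = d * n - x * n" by (simp add: algebra_simps)
    then have "real_of_int ((m0 - s) - 1) < (d - x) * n" "(d - x) * n < real_of_int (m0 - s)"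
      using xs dn by simp_all
    then have "d - x \<in> ocell (m0 - s)" unfolding ocell_def using ocell_mem[OF npos] by blast
    moreover have "m0 - s \<in> P" using s(1) unfolding P_def by auto
    ultimately show ?thesis unfolding C_def by blast
  qed
  have symC: "x \<in> C \<longleftrightarrow> d - x \<in> C" for x using symC1[of x] symC1[of "d - x"] by auto
  have Cl: "C \<in> lmeasurable" unfolding C_def ocell_def using finP by (intro fmeasurable.finite_UN) auto
  have mC: "measure lebesgue C = G / n"
  proof -
    have "measure lebesgue C = (\<Sum>s\<in>P. measure lebesgue (ocell s))"
      unfolding C_def
    proof (rule measure_finite_Union[OF finP])
      show "ocell ` P \<subseteq> sets lebesgue" unfolding ocell_def by auto
      show "emeasure lebesgue (ocell s) \<noteq> \<infinity>" for s
      proof -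
        have "ocell s \<in> lmeasurable" unfolding ocell_def by simp
        then show ?thesis by (auto simp: fmeasurable_def)
      qed
      show "disjoint_family_on ocell P" unfolding disjoint_family_on_def
      proof (intro ballI impI)
        fix s t assume st: "s \<in> P" "t \<in> P" "s \<noteq> t"
        show "ocell s \<inter> ocell t = {}"
        proof (rule ccontr)
          assume "ocell s \<inter> ocell t \<noteq> {}"
          then obtain x where "x \<in> ocell s" "x \<in> ocell t" by blast
          then have "real_of_int (s-1) < x * n" "x * n < real_of_int s"
                    "real_of_int (t-1) < x * n" "x * n < real_of_int t"
            using ocell_mem[OF npos] unfolding ocell_def by blast+
          then have "s - 1 < t" "t - 1 < s" by linarith+
          then show False using st by linarith
        qed
      qed
    qed
    also have "\<dots> = card P / n" unfolding ocell_def using cell_measure(2)[OF npos] by simp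
    finally show ?thesis using G(2) P_def by simp
  qed
  have CV: "C \<subseteq> V"
  proof
    fix x assume "x \<in> C"
    then obtain s where s: "s \<in> P" "x \<in> ocell s" unfolding C_def by auto
    have "ocell s \<subseteq> cell s" unfolding ocell_def cell_def by auto
    moreover have "cell s \<subseteq> V" using s(1) unfolding P_def S_def by auto
    ultimately show "x \<in> V" using s by blast
  qed
  have "measure lebesgue (C - A) \<le> measure lebesgue ((V - A') \<union> E)"
  proof (rule measure_mono_fmeasurable)
    show "C - A \<subseteq> (V - A') \<union> E" using CV unfolding A'_def by auto
    show "C - A \<in> sets lebesgue" using Cl A by auto
    show "(V - A') \<union> E \<in> lmeasurable" using V(3) El by auto
  qed
  also have "\<dots> \<le> measure lebesgue (V - A') + measure lebesgue E"
    by (rule measure_Un_le) (use V(3) E(2) in auto)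
  finally have mCA: "measure lebesgue (C - A) < 2 * \<eta>" using mVA' E(4) by linarith
  have "measure lebesgue C - 2 * measure lebesgue (C - A) \<le> D A"
    by (rule D_lower[OF A(2) A(1) Cl symC])
  then have "real G / real n \<le> D A + \<delta>" using mC mCA unfolding \<eta>_def by linarith
  moreover have "G \<le> n" using G(4) cardS by linarith
  ultimately show ?thesis using G(3) epsR by blast
qed

lemma dir2_eq1:
  fixes A :: "real set"
  assumes A: "A \<subseteq> {0..<1}" "A \<in> sets lebesgue" "measure lebesgue A = 1"
  shows "1 \<le> D A"
proof -
  define C where "C = {0<..<1::real}"
  have symC: "x \<in> C \<longleftrightarrow> 1 - x \<in> C" for x unfolding C_def by auto
  have Cl: "C \<in> lmeasurable" unfolding C_def by simp
  have "measure lebesgue ({0..<1} - A) = measure lebesgue {0..<1::real} - measure lebesgue A"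
    by (rule measure_Diff) (use A in auto)
  then have m0: "measure lebesgue ({0..<1} - A) = 0" using A(3) by simp
  have "measure lebesgue (C - A) \<le> measure lebesgue ({0..<1} - A)"
  proof (rule measure_mono_fmeasurable)
    show "C - A \<subseteq> {0..<1} - A" unfolding C_def by auto
    show "C - A \<in> sets lebesgue" using A(2) Cl by auto
    show "{0..<1} - A \<in> lmeasurable" by (rule sub01'_lmeas) (use A(2) in auto)
  qed
  then have "measure lebesgue (C - A) = 0" using m0 measure_nonneg[of lebesgue "C - A"] by linarith
  moreover have "measure lebesgue C = 1" unfolding C_def by simp
  moreover have "measure lebesgue C - 2 * measure lebesgue (C - A) \<le> D A"
    by (rule D_lower[OF A(2) A(1) Cl symC])
  ultimately show ?thesis by simp
qed

lemma R11: "1 \<le> R 1 1"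
proof -
  have "Bstar 1 {1}" unfolding Bstar_def
  proof
    fix m :: int
    have "{(s1, s2). s1 \<in> {1::int} \<and> s2 \<in> {1} \<and> s1 + s2 = m} \<subseteq> {(1, 1)}" by auto
    then have "card {(s1, s2). s1 \<in> {1::int} \<and> s2 \<in> {1} \<and> s1 + s2 = m} \<le> card {(1::int, 1::int)}"
      by (rule card_mono[rotated]) simp
    then show "card {(s1, s2). s1 \<in> {1::int} \<and> s2 \<in> {1} \<and> s1 + s2 = m} \<le> 1" by simp
  qed
  then have "card {1::int} \<le> R 1 1" by (intro R_ge) auto
  then show ?thesis by simp
qed

theorem proposition3p3:
  fixes \<epsilon> :: real
  assumes "0 \<le> \<epsilon>" and "\<epsilon> \<le> 1"
  shows "Delta \<epsilon> = Inf {real g / real n | g n :: nat. 1 \<le> g \<and> g \<le> n \<and> real (R g n) / real n \<ge> \<epsilon>}"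
proof -
  define Q where "Q = {real g / real n | g n :: nat. 1 \<le> g \<and> g \<le> n \<and> real (R g n) / real n \<ge> \<epsilon>}"
  have Q1: "1 \<in> Q"
  proof -
    have "\<epsilon> \<le> real (R 1 1) / real (1::nat)" using R11 assms by simp
    then have "real (1::nat) / real (1::nat) \<in> Q" unfolding Q_def by blast
    then show ?thesis by simp
  qed
  have Qb: "bdd_below Q"
  proof (rule bdd_belowI[of _ 0])
    fix x assume "x \<in> Q"
    then obtain g n :: nat where "x = real g / real n" unfolding Q_def by blast
    then show "0 \<le> x" by simp
  qed
  have QI: "Inf Q \<le> real g / real n" if "1 \<le> g" "g \<le> n" "\<epsilon> \<le> real (R g n) / real n" for g n :: nat
    by (rule cInf_lower[OF _ Qb]) (use that in \<open>auto simp: Q_def\<close>)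
  have "Delta \<epsilon> \<le> Inf Q"
  proof (rule cInf_greatest)
    show "Q \<noteq> {}" using Q1 by blast
    fix x assume "x \<in> Q"
    then obtain g n :: nat where "x = real g / real n" "1 \<le> g" "g \<le> n" "\<epsilon> \<le> real (R g n) / real n"
      unfolding Q_def by blast
    then show "Delta \<epsilon> \<le> x" using dir1 assms by simp
  qed
  moreover have "Inf Q \<le> Delta \<epsilon>"
    unfolding Delta_def
  proof (rule cInf_greatest)
    have "{0..<\<epsilon>} \<subseteq> {0..<1}" "{0..<\<epsilon>} \<in> sets lebesgue" "measure lebesgue {0..<\<epsilon>} = \<epsilon>"
      using assms by auto
    then show "{D A |A. A \<subseteq> {0..<1} \<and> A \<in> sets lebesgue \<and> measure lebesgue A = \<epsilon>} \<noteq> {}" by blast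
    fix x assume "x \<in> {D A |A. A \<subseteq> {0..<1} \<and> A \<in> sets lebesgue \<and> measure lebesgue A = \<epsilon>}"
    then obtain A where A: "x = D A" "A \<subseteq> {0..<1}" "A \<in> sets lebesgue" "measure lebesgue A = \<epsilon>" by blast
    show "Inf Q \<le> x"
    proof (cases "\<epsilon> < 1")
      case True
      have "Inf Q \<le> D A + \<delta>" if dpos: "\<delta> > 0" for \<delta>
      proof -
        obtain g n where gn: "1 \<le> g" "g \<le> n" "\<epsilon> \<le> real (R g n) / real n" "real g / real n \<le> D A + \<delta>"
          using dir2_lt1[OF A(2,3,4) True dpos] by blast
        have "Inf Q \<le> real g / real n" by (rule QI[OF gn(1-3)])
        then show ?thesis using gn(4) by linarith
      qed
      then have "Inf Q \<le> D A" by (rule field_le_epsilon)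
      then show ?thesis using A(1) by simp
    next
      case False
      then have "measure lebesgue A = 1" using A(4) assms by simp
      then have "1 \<le> D A" using dir2_eq1 A by blast
      moreover have "Inf Q \<le> 1" using cInf_lower[OF Q1 Qb] .
      ultimately show ?thesis using A(1) by simp
    qed
  qed
  ultimately show ?thesis unfolding Q_def by simp
qed

end
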